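(* Consider the following regulation game. A random triple $(\theta,s,d)$ (agent type, training state, deployment state) has joint distribution $\pi$. Prediction functions are vectors $f\in\mathbb{R}^n$. Given $s$ (and $\theta$), expected agent utility and expected principal welfare are $\overline{U}_\theta(f;s) = -(f-\bar u)'\overline{\Omega}_U(f-\bar u)$ and $\overline{W}(f;s) = -(f-\bar w)'\overline{\Omega}_W(f-\bar w)$ with $\bar u=\bar u(s,\theta)$, $\bar w=\bar w(s)\in\mathbb{R}^n$. The principal first (knowing only $\pi$) chooses a linear explainer, i.e. a $k\times n$ real matrix $\mathcal{E}$ ($k<n$), and possibly an ex-ante restriction $\mathcal{F}=\{f\in\mathbb{R}^n: Af=a\}$ with $A\in\mathbb{R}^{m\times n}$, $a\in\mathbb{R}^m$ not depending on $s$ or $\theta$; she then, after observing $s$, dictates the value of the explanation $\mathcal{E}f=e(s)$ (a failed audit has infinite cost to the agent). The agent, knowing $\theta$ and $s$, chooses $f$ maximizing $\overline{U}_\theta(f;s)$ subject to $Af=a$ and $\mathcal{E}f=e(s)$. The principal chooses her instruments to maximize $\mathop{E}_\pi[\overline{W}(f;s)]$. A restriction is called fully explainable if, together with the explainer, it determines $f$ completely (i.e. $f$ is restricted to a $k$-dimensional space on which $\mathcal{E}$ is fully informative, e.g. $A$ of rank $n-k$). Assume $\overline{\Omega}_U=\overline{\Omega}_W$ and both are constant (non-random) and positive definite almost surely. If $\operatorname{Var}_\pi(\bar w) \succ \mathop{E}_\pi[(\bar u-\bar w)(\bar u-\bar w)']$ (in the positive definite order), then restricting the agent to fully explainable functions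 is never optimal for any $k<n$; indeed it is dominated (in expected welfare) by not restricting the agent ex-ante at all.
   Context: $\succ$ denotes the order on symmetric matrices given by positive definiteness of the difference. *)

theory Defs
  imports "HOL-Probability.Probability"
begin

definition pos_def_mat :: "real^'n^'n \<Rightarrow> bool" where
  "pos_def_mat Q \<longleftrightarrow> transpose Q = Q \<and> (\<forall>x. x \<noteq> 0 \<longrightarrow> x \<bullet> (Q *v x) > 0)"

definition loewner_gt :: "real^'n^'n \<Rightarrow> real^'n^'n \<Rightarrow> bool" where
  "loewner_gt P Q \<longleftrightarrow> pos_def_mat (P - Q)"

definition mean_vec :: "'w measure \<Rightarrow> ('w \<Rightarrow> real^'n) \<Rightarrow> real^'n" where
  "mean_vec M X = (\<chi> i. integral\<^sup>L M (\<lambda>\<omega>. X \<omega> $ i))"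

definition var_matrix :: "'w measure \<Rightarrow> ('w \<Rightarrow> real^'n) \<Rightarrow> real^'n^'n" where
  "var_matrix M X = (\<chi> i j. integral\<^sup>L M
      (\<lambda>\<omega>. (X \<omega> $ i - mean_vec M X $ i) * (X \<omega> $ j - mean_vec M X $ j)))"

definition second_moment :: "'w measure \<Rightarrow> ('w \<Rightarrow> real^'n) \<Rightarrow> real^'n^'n" where
  "second_moment M X = (\<chi> i j. integral\<^sup>L M (\<lambda>\<omega>. X \<omega> $ i * X \<omega> $ j))"

definition quad_loss :: "real^'n^'n \<Rightarrow> real^'n \<Rightarrow> real^'n \<Rightarrow> real" where
  "quad_loss Q c f = (f - c) \<bullet> (Q *v (f - c))"

definition quad_util :: "real^'n^'n \<Rightarrow> real^'n \<Rightarrow> real^'n \<Rightarrow> real" where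
  "quad_util Q c f = - quad_loss Q c f"

definition agent_best :: "real^'n^'n \<Rightarrow> real^'n \<Rightarrow> (real^'n \<Rightarrow> bool) \<Rightarrow> real^'n \<Rightarrow> bool" where
  "agent_best Q u C f \<longleftrightarrow> C f \<and> (\<forall>g. C g \<longrightarrow> quad_util Q u g \<le> quad_util Q u f)"

definition fully_explainable :: "real^'n^'k \<Rightarrow> real^'n^'m \<Rightarrow> real^'m \<Rightarrow> bool" where
  "fully_explainable E A a \<longleftrightarrow>
     (\<forall>x y. A *v x = a \<longrightarrow> A *v y = a \<longrightarrow> E *v x = E *v y \<longrightarrow> x = y)"

end

theory Submission
  imports Defs
begin


definition ip :: "real^'n^'n \<Rightarrow> real^'n \<Rightarrow> real^'n \<Rightarrow> real" where
  "ip Om x y = x \<bullet> (Om *v y)"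

definition orthonorm :: "real^'n^'n \<Rightarrow> (real^'n) set \<Rightarrow> bool" where
  "orthonorm Om T \<longleftrightarrow> (\<forall>t\<in>T. ip Om t t = 1) \<and> (\<forall>t\<in>T. \<forall>t'\<in>T. t \<noteq> t' \<longrightarrow> ip Om t t' = 0)"

lemma lin_Om: "linear ((*v) (Om::real^'n^'n))"
  by simp

lemma ip_add_right: "ip Om x (y + z) = ip Om x y + ip Om x z"
  by (simp add: ip_def matrix_vector_right_distrib inner_add_right)
lemma ip_add_left: "ip Om (x + y) z = ip Om x z + ip Om y z"
  by (simp add: ip_def inner_add_left)
lemma ip_diff_right: "ip Om x (y - z) = ip Om x y - ip Om x z"
  by (simp add: ip_def linear_diff[OF lin_Om] inner_diff_right)
lemma ip_diff_left: "ip Om (x - y) z = ip Om x z - ip Om y z"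
  by (simp add: ip_def inner_diff_left)
lemma ip_scale_right: "ip Om x (c *\<^sub>R y) = c * ip Om x y"
  by (simp add: ip_def linear_scale[OF lin_Om])
lemma ip_scale_left: "ip Om (c *\<^sub>R x) y = c * ip Om x y"
  by (simp add: ip_def)
lemma ip_zero_right[simp]: "ip Om x 0 = 0"
  by (simp add: ip_def)
lemma ip_zero_left[simp]: "ip Om 0 x = 0"
  by (simp add: ip_def)
lemma ip_sum_right: "ip Om x (\<Sum>i\<in>I. f i) = (\<Sum>i\<in>I. ip Om x (f i))"
  by (simp add: ip_def linear_sum[OF lin_Om] inner_sum_right)
lemma ip_sum_left: "ip Om (\<Sum>i\<in>I. f i) y = (\<Sum>i\<in>I. ip Om (f i) y)"
  by (simp add: ip_def inner_sum_left)
lemma ip_sym: "pos_def_mat Om \<Longrightarrow> ip Om x y = ip Om y x"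
  unfolding ip_def pos_def_mat_def
  by (metis dot_lmul_matrix inner_commute transpose_matrix_vector)
lemma ip_alt: "pos_def_mat Om \<Longrightarrow> ip Om x y = (Om *v x) \<bullet> y"
  unfolding ip_def pos_def_mat_def
  by (metis dot_lmul_matrix transpose_matrix_vector)
lemma ip_pos: "pos_def_mat Om \<Longrightarrow> x \<noteq> 0 \<Longrightarrow> ip Om x x > 0"
  unfolding ip_def pos_def_mat_def by auto
lemma ip_nonneg: "pos_def_mat Om \<Longrightarrow> ip Om x x \<ge> 0"
  using ip_pos[of Om x] by (cases "x = 0") auto

lemma ip_orth_sum:
  assumes "orthonorm Om T" "finite T" "s \<in> T"
  shows "ip Om s (\<Sum>t\<in>T. c t *\<^sub>R t) = c s"
proof -
  have "ip Om s (\<Sum>t\<in>T. c t *\<^sub>R t) = (\<Sum>t\<in>T. c t * ip Om s t)"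
    by (simp add: ip_sum_right ip_scale_right)
  also have "\<dots> = (\<Sum>t\<in>T. if t = s then c t else 0)"
    using assms(1,3) unfolding orthonorm_def by (intro sum.cong) auto
  also have "\<dots> = c s" using assms(2,3) by simp
  finally show ?thesis .
qed

lemma GS:
  assumes pd: "pos_def_mat Om" and "finite S"
  shows "\<exists>T. finite T \<and> orthonorm Om T \<and> span T = span S"
  using assms(2)
proof (induction S rule: finite_induct)
  case empty
  then show ?case by (intro exI[of _ "{}"]) (simp add: orthonorm_def)
next
  case (insert x S)
  then obtain T where T: "finite T" "orthonorm Om T" "span T = span S" by blast
  define p where "p = (\<Sum>t\<in>T. ip Om t x *\<^sub>R t)"
  define v where "v = x - p"
  have pspan: "p \<in> span T" unfolding p_def
    by (intro span_sum span_scale span_base)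
  have vorth: "ip Om t v = 0" if "t \<in> T" for t
    using ip_orth_sum[OF T(2) T(1) that, of "\<lambda>t. ip Om t x"] that
    by (simp add: v_def p_def ip_diff_right)
  have span2: "span (insert x T) = span (insert x S)"
    unfolding span_eq using T(3)
    by (auto intro: span_base span_mono[THEN subsetD] simp: subset_iff)
  show ?case
  proof (cases "v = 0")
    case True
    then have "x \<in> span T" using pspan by (simp add: v_def)
    then have "span (insert x T) = span T" by (simp add: span_redundant)
    then show ?thesis using T span2 by auto
  next
    case False
    define n where "n = sqrt (ip Om v v)"
    have vpos: "ip Om v v > 0" using ip_pos[OF pd False] .
    then have npos: "n > 0" by (simp add: n_def)
    define t0 where "t0 = (1/n) *\<^sub>R v"
    have t0t0: "ip Om t0 t0 = 1"
      using vpos npos by (simp add: t0_def ip_scale_left ip_scale_right n_def)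
    have t0orth: "ip Om t t0 = 0" if "t \<in> T" for t
      using vorth[OF that] by (simp add: t0_def ip_scale_right)
    have t0orth2: "ip Om t0 t = 0" if "t \<in> T" for t
      using t0orth[OF that] ip_sym[OF pd] by metis
    have t0T: "t0 \<notin> T" using t0orth t0t0 by force
    have on: "orthonorm Om (insert t0 T)"
      using T(2) t0t0 t0orth t0orth2 unfolding orthonorm_def by auto
    have xeq: "x = n *\<^sub>R t0 + p" using npos by (simp add: t0_def v_def)
    have s1: "insert t0 T \<subseteq> span (insert x T)"
    proof -
      have "x \<in> span (insert x T)" by (intro span_base) simp
      moreover have "p \<in> span (insert x T)" by (auto intro: span_mono[THEN subsetD, OF _ pspan])
      ultimately have "t0 \<in> span (insert x T)"
        unfolding t0_def v_def by (intro span_scale span_diff)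
      then show ?thesis by (auto intro: span_base)
    qed
    have s2: "insert x T \<subseteq> span (insert t0 T)"
    proof -
      have "n *\<^sub>R t0 \<in> span (insert t0 T)" by (intro span_scale span_base) simp
      moreover have "p \<in> span (insert t0 T)" by (auto intro: span_mono[THEN subsetD, OF _ pspan])
      ultimately have "x \<in> span (insert t0 T)" unfolding xeq by (rule span_add)
      then show ?thesis by (auto intro: span_base)
    qed
    have "span (insert t0 T) = span (insert x T)"
      using s1 s2 span_eq by blast
    then show ?thesis using on T(1) span2 by (intro exI[of _ "insert t0 T"]) auto
  qed
qed

lemma GS_subspace:
  assumes pd: "pos_def_mat (Om::real^'n^'n)" and "subspace V"
  shows "\<exists>T. finite T \<and> orthonorm Om T \<and> span T = V"
proof -
  obtain B where B: "B \<subseteq> V" "independent B" "V \<subseteq> span B" "card B = dim V"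
    by (rule basis_exists)
  have fin: "finite B" using B(2) by (rule finiteI_independent)
  have "span B \<subseteq> V" using B(1) assms(2) by (rule span_minimal)
  then have "span B = V" using B(3) by (rule antisym)
  moreover obtain T where "finite T" "orthonorm Om T" "span T = span B" using GS[OF pd fin] by blast
  ultimately show ?thesis by auto
qed

definition proj :: "real^'n^'n \<Rightarrow> (real^'n) set \<Rightarrow> real^'n \<Rightarrow> real^'n" where
  "proj Om T x = (\<Sum>t\<in>T. ip Om t x *\<^sub>R t)"

lemma proj_span: "proj Om T x \<in> span T"
  unfolding proj_def by (intro span_sum span_scale span_base)

lemma subspace_orth: "subspace {z. ip Om z y = 0}"
  unfolding subspace_def by (simp add: ip_add_left ip_scale_left)

lemma proj_orth:
  assumes "orthonorm Om T" "finite T" "z \<in> span T"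
  shows "ip Om z (x - proj Om T x) = 0"
proof -
  have "ip Om t (x - proj Om T x) = 0" if "t \<in> T" for t
    using ip_orth_sum[OF assms(1,2) that, of "\<lambda>t. ip Om t x"]
    by (simp add: proj_def ip_diff_right)
  then show ?thesis
    using span_induct[OF assms(3) subspace_orth, of Om "x - proj Om T x"] by blast
qed

lemma proj_norm:
  assumes "orthonorm Om T" "finite T"
  shows "ip Om (proj Om T x) (proj Om T x) = (\<Sum>t\<in>T. (ip Om t x)^2)"
proof -
  have "ip Om (proj Om T x) (proj Om T x) = (\<Sum>s\<in>T. ip Om s x * ip Om s (proj Om T x))"
    by (simp add: proj_def ip_sum_left ip_scale_left)
  also have "\<dots> = (\<Sum>s\<in>T. (ip Om s x)^2)"
    using ip_orth_sum[OF assms, of _ "\<lambda>t. ip Om t x"]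
    by (intro sum.cong) (auto simp: proj_def power2_eq_square)
  finally show ?thesis .
qed

lemma pyth:
  assumes pd: "pos_def_mat (Om::real^'n^'n)" and "ip Om a b = 0"
  shows "ip Om (a + b) (a + b) = ip Om a a + ip Om b b"
proof -
  have "ip Om b a = 0" using assms ip_sym by metis
  then show ?thesis using assms(2) by (simp add: ip_add_left ip_add_right)
qed

lemma bessel:
  assumes pd: "pos_def_mat (Om::real^'n^'n)" and "orthonorm Om T" "finite T"
  shows "ip Om x x \<ge> (\<Sum>t\<in>T. (ip Om t x)^2)"
proof -
  have "ip Om (proj Om T x) (x - proj Om T x) = 0"
    using proj_orth[OF assms(2,3) proj_span] .
  then have "ip Om (proj Om T x + (x - proj Om T x)) (proj Om T x + (x - proj Om T x))
     = ip Om (proj Om T x) (proj Om T x) + ip Om (x - proj Om T x) (x - proj Om T x)"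
    by (rule pyth[OF pd])
  then have "ip Om x x = (\<Sum>t\<in>T. (ip Om t x)^2) + ip Om (x - proj Om T x) (x - proj Om T x)"
    using proj_norm[OF assms(2,3)] by simp
  then show ?thesis using ip_nonneg[OF pd, of "x - proj Om T x"] by linarith
qed

lemma quad_loss_ip: "quad_loss Om c f = ip Om (f - c) (f - c)"
  by (simp add: quad_loss_def ip_def)

lemma linM: "linear ((*v) (B::real^'n^'m))"
  by simp

lemma kern_subspace: "subspace {x. (B::real^'n^'m) *v x = 0}"
  unfolding subspace_def
  by (simp add: linear_add[OF linM] linear_scale[OF linM] linear_0[OF linM])

lemma proj_linear: "linear (proj (Om::real^'n^'n) T)"
proof (rule linearI)
  fix x y show "proj Om T (x + y) = proj Om T x + proj Om T y"
    by (simp add: proj_def ip_add_right scaleR_add_left sum.distrib)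
next
  fix c :: real and x show "proj Om T (c *\<^sub>R x) = c *\<^sub>R proj Om T x"
    by (simp add: proj_def ip_scale_right scaleR_sum_right)
qed

lemma LA_main:
  fixes Om :: "real^'n^'n" and E :: "real^'n^'k" and A :: "real^'n^'m"
  assumes pd: "pos_def_mat Om" and fe: "fully_explainable E A a" and a0: "A *v a0 = a"
    and card: "CARD('k) < CARD('n)"
  shows "\<exists>(E'::real^'n^'k) T. finite T \<and> T \<noteq> {} \<and> orthonorm Om T \<and>
     (\<forall>w u. agent_best Om u (\<lambda>g. E' *v g = E' *v w) (w + proj Om T (u - w))) \<and>
     (\<forall>w u. quad_loss Om w (w + proj Om T (u - w)) = (\<Sum>t\<in>T. (ip Om t (u - w))^2)) \<and>
     (\<forall>w x. A *v x = a \<longrightarrow> quad_loss Om w x \<ge> (\<Sum>t\<in>T. (ip Om t (a0 - w))^2))"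
proof -
  define L where "L = {x. A *v x = 0}"
  have subL: "subspace L" unfolding L_def by (rule kern_subspace)
  obtain TL where TL: "finite TL" "orthonorm Om TL" "span TL = L"
    using GS_subspace[OF pd subL] by blast
  have linEP: "linear (\<lambda>x. E *v proj Om TL x)"
    using linear_compose[OF proj_linear[of Om TL] linM[of E]] by (simp add: o_def)
  define E' where "E' = matrix (\<lambda>x. E *v proj Om TL x)"
  have E'x: "E' *v x = E *v proj Om TL x" for x
    unfolding E'_def using matrix_works[OF linEP[folded linear_matrix_vector_mul_eq]] by simp
  define K where "K = {x. E' *v x = 0}"
  have subK: "subspace K" unfolding K_def by (rule kern_subspace)
  obtain T where T: "finite T" "orthonorm Om T" "span T = K"
    using GS_subspace[OF pd subK] by blast
  have KL: "ip Om l x = 0" if "x \<in> K" "l \<in> L" for x l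
  proof -
    have "E *v proj Om TL x = 0" using that(1) by (simp add: K_def E'x)
    have PL: "proj Om TL x \<in> L" using proj_span[of Om TL x] TL(3) by simp
    then have "A *v (a0 + proj Om TL x) = a"
      using a0 by (simp add: L_def matrix_vector_right_distrib)
    moreover have "E *v (a0 + proj Om TL x) = E *v a0"
      using \<open>E *v proj Om TL x = 0\<close> by (simp add: matrix_vector_right_distrib)
    ultimately have "a0 + proj Om TL x = a0"
      using fe a0 unfolding fully_explainable_def by blast
    then have P0: "proj Om TL x = 0" by simp
    have "ip Om t x = 0" if "t \<in> TL" for t
      using ip_orth_sum[OF TL(2) TL(1) that, of "\<lambda>t. ip Om t x"] P0
      by (simp add: proj_def)
    then show ?thesis
      using span_induct[of l TL "\<lambda>z. ip Om z x = 0"] subspace_orth[of Om x] that(2) TL(3)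
      by auto
  qed
  have Tne: "T \<noteq> {}"
  proof
    assume "T = {}"
    then have K0: "K = {0}" using T(3) by simp
    have "rank E' \<le> min CARD('k) CARD('n)" by (rule rank_bound)
    then have "rank E' \<noteq> CARD('n)" using card by linarith
    then obtain x where "x \<noteq> 0" "E' *v x = 0"
      using matrix_nonfull_linear_equations_eq[of E'] by blast
    then show False using K0 by (auto simp: K_def)
  qed
  have TK: "t \<in> K" if "t \<in> T" for t using span_base[OF that] T(3) by simp
  have QK: "proj Om T y \<in> K" for y using proj_span[of Om T y] T(3) by simp
  have best: "agent_best Om u (\<lambda>g. E' *v g = E' *v w) (w + proj Om T (u - w))" for w u
  proof -
    define y where "y = u - w"
    define f' where "f' = w + proj Om T y"
    have feas: "E' *v f' = E' *v w"
      using QK[of y] by (simp add: f'_def K_def matrix_vector_right_distrib)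
    have opt: "quad_util Om u g \<le> quad_util Om u f'" if "E' *v g = E' *v w" for g
    proof -
      define d where "d = g - f'"
      have dK: "d \<in> K" using that feas by (simp add: d_def K_def matrix_vector_mult_diff_distrib)
      have o: "ip Om d (y - proj Om T y) = 0"
        using proj_orth[OF T(2) T(1)] dK T(3) by blast
      have fu: "f' - u = proj Om T y - y" by (simp add: f'_def y_def)
      have o2: "ip Om d (f' - u) = 0" using o unfolding fu by (simp add: ip_diff_right)
      have "g - u = d + (f' - u)" by (simp add: d_def)
      then have "ip Om (g - u) (g - u) = ip Om d d + ip Om (f' - u) (f' - u)"
        using pyth[OF pd o2] by metis
      then have "ip Om (g - u) (g - u) \<ge> ip Om (f' - u) (f' - u)"
        using ip_nonneg[OF pd, of d] by linarith
      then show ?thesis by (simp add: quad_util_def quad_loss_ip)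
    qed
    show ?thesis unfolding agent_best_def using feas opt by (simp add: f'_def y_def)
  qed
  have lossf': "quad_loss Om w (w + proj Om T (u - w)) = (\<Sum>t\<in>T. (ip Om t (u - w))^2)" for w u
    using proj_norm[OF T(2) T(1)] by (simp add: quad_loss_ip)
  have lossf: "quad_loss Om w x \<ge> (\<Sum>t\<in>T. (ip Om t (a0 - w))^2)" if "A *v x = a" for w x
  proof -
    have xL: "x - a0 \<in> L" using that a0 by (simp add: L_def matrix_vector_mult_diff_distrib)
    have "ip Om t (x - w) = ip Om t (a0 - w)" if "t \<in> T" for t
    proof -
      have "ip Om (x - a0) t = 0" using KL[OF TK[OF that] xL] .
      then have "ip Om t (x - a0) = 0" using ip_sym[OF pd] by metis
      moreover have "x - w = (x - a0) + (a0 - w)" by simp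
      ultimately show ?thesis by (metis add_0 ip_add_right)
    qed
    then have "(\<Sum>t\<in>T. (ip Om t (a0 - w))^2) = (\<Sum>t\<in>T. (ip Om t (x - w))^2)"
      by simp
    also have "\<dots> \<le> quad_loss Om w x"
      using bessel[OF pd T(2) T(1)] by (simp add: quad_loss_ip)
    finally show ?thesis .
  qed
  show ?thesis
    using T Tne best lossf' lossf by blast
qed




lemma abs_prod_le: "\<bar>(a::real) * b\<bar> \<le> a^2 + b^2"
proof -
  have "0 \<le> (\<bar>a\<bar> - \<bar>b\<bar>)^2" by simp
  then have "2 * (\<bar>a\<bar> * \<bar>b\<bar>) \<le> a^2 + b^2" by (simp add: power2_eq_square algebra_simps)
  moreover have "0 \<le> \<bar>a\<bar> * \<bar>b\<bar>" by simp
  ultimately show ?thesis unfolding abs_mult by linarith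
qed

lemma comp_meas:
  assumes "X \<in> borel_measurable M"
  shows "(\<lambda>\<omega>. (X \<omega> :: real^'n) $ i) \<in> borel_measurable M"
  using measurable_compose[OF assms borel_measurable_nth] by simp

lemma prod_int:
  fixes f g :: "'w \<Rightarrow> real"
  assumes "f \<in> borel_measurable M" "g \<in> borel_measurable M"
    "integrable M (\<lambda>x. (f x)^2)" "integrable M (\<lambda>x. (g x)^2)"
  shows "integrable M (\<lambda>x. f x * g x)"
proof (rule Bochner_Integration.integrable_bound[where f="\<lambda>x. (f x)^2 + (g x)^2"])
  show "integrable M (\<lambda>x. (f x)\<^sup>2 + (g x)\<^sup>2)" using assms by simp
  show "(\<lambda>x. f x * g x) \<in> borel_measurable M" using assms by simp
  show "AE x in M. norm (f x * g x) \<le> norm ((f x)\<^sup>2 + (g x)\<^sup>2)"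
    using abs_prod_le by (simp add: abs_of_nonneg)
qed

lemma sq_int_diff:
  fixes f g :: "'w \<Rightarrow> real"
  assumes "f \<in> borel_measurable M" "g \<in> borel_measurable M"
    "integrable M (\<lambda>x. (f x)^2)" "integrable M (\<lambda>x. (g x)^2)"
  shows "integrable M (\<lambda>x. (f x - g x)^2)"
proof -
  have "integrable M (\<lambda>x. (f x)^2 - 2 * (f x * g x) + (g x)^2)"
    using prod_int[OF assms] assms by simp
  then show ?thesis by (simp add: power2_diff algebra_simps)
qed

lemma quadform:
  fixes Z :: "'w \<Rightarrow> real^'n"
  assumes meas: "\<And>i. (\<lambda>\<omega>. Z \<omega> $ i) \<in> borel_measurable M"
    and sq: "\<And>i. integrable M (\<lambda>\<omega>. (Z \<omega> $ i)^2)"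
  shows "v \<bullet> (second_moment M Z *v v) = (\<integral>\<omega>. (v \<bullet> Z \<omega>)^2 \<partial>M)"
    and "integrable M (\<lambda>\<omega>. (v \<bullet> Z \<omega>)^2)"
proof -
  have pi: "integrable M (\<lambda>\<omega>. Z \<omega> $ i * Z \<omega> $ j)" for i j
    by (rule prod_int[OF meas meas sq sq])
  have exp: "(v \<bullet> Z \<omega>)^2 = (\<Sum>i\<in>UNIV. \<Sum>j\<in>UNIV. v $ i * v $ j * (Z \<omega> $ i * Z \<omega> $ j))" for \<omega>
    by (simp add: inner_vec_def power2_eq_square sum_product algebra_simps)
  show "integrable M (\<lambda>\<omega>. (v \<bullet> Z \<omega>)^2)"
    unfolding exp using pi by simp
  have "v \<bullet> (second_moment M Z *v v) = (\<Sum>i\<in>UNIV. \<Sum>j\<in>UNIV. v $ i * v $ j * (\<integral>\<omega>. Z \<omega> $ i * Z \<omega> $ j \<partial>M))"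
    by (simp add: inner_vec_def matrix_vector_mult_def second_moment_def sum_distrib_left algebra_simps)
  also have "\<dots> = (\<integral>\<omega>. (\<Sum>i\<in>UNIV. \<Sum>j\<in>UNIV. v $ i * v $ j * (Z \<omega> $ i * Z \<omega> $ j)) \<partial>M)"
    using pi by (simp add: integral_sum)
  also have "\<dots> = (\<integral>\<omega>. (v \<bullet> Z \<omega>)^2 \<partial>M)" unfolding exp ..
  finally show "v \<bullet> (second_moment M Z *v v) = (\<integral>\<omega>. (v \<bullet> Z \<omega>)^2 \<partial>M)" .
qed

lemma var_is_sm: "var_matrix M X = second_moment M (\<lambda>\<omega>. X \<omega> - mean_vec M X)"
  by (simp add: var_matrix_def second_moment_def)

lemma key_ineq:
  fixes W U :: "'w \<Rightarrow> real^'n"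
  assumes P: "prob_space M"
    and mW: "W \<in> borel_measurable M" and mU: "U \<in> borel_measurable M"
    and sW: "\<And>i. integrable M (\<lambda>\<omega>. (W \<omega> $ i)^2)"
    and sU: "\<And>i. integrable M (\<lambda>\<omega>. (U \<omega> $ i)^2)"
    and lo: "loewner_gt (var_matrix M W) (second_moment M (\<lambda>\<omega>. U \<omega> - W \<omega>))"
    and v0: "v \<noteq> 0"
  shows "integrable M (\<lambda>\<omega>. (v \<bullet> (U \<omega> - W \<omega>))^2)"
    and "integrable M (\<lambda>\<omega>. (v \<bullet> (c - W \<omega>))^2)"
    and "(\<integral>\<omega>. (v \<bullet> (U \<omega> - W \<omega>))^2 \<partial>M) < (\<integral>\<omega>. (v \<bullet> (c - W \<omega>))^2 \<partial>M)"
proof -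
  interpret prob_space M by (rule P)
  have mWi: "(\<lambda>\<omega>. W \<omega> $ i) \<in> borel_measurable M" for i by (rule comp_meas[OF mW])
  have mUi: "(\<lambda>\<omega>. U \<omega> $ i) \<in> borel_measurable M" for i by (rule comp_meas[OF mU])
  have csq: "integrable M (\<lambda>\<omega>. (d::real)^2)" for d by simp
  have cm: "(\<lambda>\<omega>. d::real) \<in> borel_measurable M" for d by simp
  define \<mu> where "\<mu> = mean_vec M W"
  define Y where "Y = (\<lambda>\<omega>. U \<omega> - W \<omega>)"
  define X where "X = (\<lambda>\<omega>. W \<omega> - \<mu>)"
  have mY: "(\<lambda>\<omega>. Y \<omega> $ i) \<in> borel_measurable M" for i using mUi mWi by (simp add: Y_def)
  have sY: "integrable M (\<lambda>\<omega>. (Y \<omega> $ i)^2)" for i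
    using sq_int_diff[OF mUi mWi sU sW] by (simp add: Y_def)
  have mX: "(\<lambda>\<omega>. X \<omega> $ i) \<in> borel_measurable M" for i using mWi by (simp add: X_def)
  have sX: "integrable M (\<lambda>\<omega>. (X \<omega> $ i)^2)" for i
    using sq_int_diff[OF mWi cm sW csq] by (simp add: X_def)
  note qY = quadform[OF mY sY, of v]
  note qX = quadform[OF mX sX, of v]
  show "integrable M (\<lambda>\<omega>. (v \<bullet> (U \<omega> - W \<omega>))^2)" using qY(2) by (simp add: Y_def)
  have iW: "integrable M (\<lambda>\<omega>. W \<omega> $ i)" for i
    by (rule square_integrable_imp_integrable[OF mWi sW])
  have iX: "integrable M (\<lambda>\<omega>. v \<bullet> X \<omega>)"
    using iW by (simp add: X_def inner_vec_def)
  have eX: "(\<integral>\<omega>. v \<bullet> X \<omega> \<partial>M) = 0"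
  proof -
    have "(\<integral>\<omega>. v \<bullet> X \<omega> \<partial>M) = (\<Sum>i\<in>UNIV. v $ i * ((\<integral>\<omega>. W \<omega> $ i \<partial>M) - \<mu> $ i))"
      using iW by (simp add: X_def inner_vec_def integral_sum integral_diff prob_space algebra_simps)
    also have "\<dots> = 0" by (simp add: \<mu>_def mean_vec_def)
    finally show ?thesis .
  qed
  define b where "b = v \<bullet> (c - \<mu>)"
  have rew: "(v \<bullet> (c - W \<omega>))^2 = (v \<bullet> X \<omega>)^2 - 2 * b * (v \<bullet> X \<omega>) + b^2" for \<omega>
  proof -
    have h: "v \<bullet> (c - W \<omega>) = b - v \<bullet> X \<omega>" by (simp add: b_def X_def inner_diff_right)
    show ?thesis unfolding h power2_diff by (simp add: algebra_simps)
  qed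
  have i2: "integrable M (\<lambda>\<omega>. (v \<bullet> X \<omega>)^2 - 2 * b * (v \<bullet> X \<omega>) + b^2)"
    using qX(2) iX by simp
  show "integrable M (\<lambda>\<omega>. (v \<bullet> (c - W \<omega>))^2)" unfolding rew by (rule i2)
  have "(\<integral>\<omega>. (v \<bullet> (c - W \<omega>))^2 \<partial>M) = (\<integral>\<omega>. (v \<bullet> X \<omega>)^2 \<partial>M) + b^2"
    unfolding rew using qX(2) iX eX by (simp add: integral_diff integral_add prob_space)
  then have ge: "(\<integral>\<omega>. (v \<bullet> (c - W \<omega>))^2 \<partial>M) \<ge> v \<bullet> (var_matrix M W *v v)"
    using qX(1) by (simp add: var_is_sm X_def \<mu>_def)
  have "v \<bullet> ((var_matrix M W - second_moment M Y) *v v) > 0"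
    using lo v0 unfolding loewner_gt_def pos_def_mat_def Y_def by blast
  then have "v \<bullet> (second_moment M Y *v v) < v \<bullet> (var_matrix M W *v v)"
    by (simp add: matrix_vector_mult_diff_rdistrib inner_diff_right)
  then show "(\<integral>\<omega>. (v \<bullet> (U \<omega> - W \<omega>))^2 \<partial>M) < (\<integral>\<omega>. (v \<bullet> (c - W \<omega>))^2 \<partial>M)"
    using qY(1) ge by (simp add: Y_def)
qed


theorem mainTheorem2:
  fixes M :: "'w measure" and MS :: "'s measure" and MT :: "'t measure"
    and S :: "'w \<Rightarrow> 's" and Th :: "'w \<Rightarrow> 't"
    and ubar :: "'s \<Rightarrow> 't \<Rightarrow> real^'n" and wbar :: "'s \<Rightarrow> real^'n"
    and Om :: "real^'n^'n"
    and E :: "real^'n^'k" and A :: "real^'n^'m" and a :: "real^'m"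
    and e :: "'s \<Rightarrow> real^'k" and f :: "'s \<Rightarrow> 't \<Rightarrow> real^'n"
  assumes "prob_space M"
    and "S \<in> measurable M MS" and "Th \<in> measurable M MT"
    and "wbar \<in> borel_measurable MS"
    and "(\<lambda>\<omega>. ubar (S \<omega>) (Th \<omega>)) \<in> borel_measurable M"
    and "\<forall>i. integrable M (\<lambda>\<omega>. (wbar (S \<omega>) $ i)\<^sup>2)"
    and "\<forall>i. integrable M (\<lambda>\<omega>. (ubar (S \<omega>) (Th \<omega>) $ i)\<^sup>2)"
    and "pos_def_mat Om"
    and "loewner_gt (var_matrix M (\<lambda>\<omega>. wbar (S \<omega>)))
                    (second_moment M (\<lambda>\<omega>. ubar (S \<omega>) (Th \<omega>) - wbar (S \<omega>)))"
    and "CARD('k) < CARD('n)"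
    and "fully_explainable E A a"
    and "\<forall>s t. agent_best Om (ubar s t) (\<lambda>g. A *v g = a \<and> E *v g = e s) (f s t)"
  shows "\<exists>(E' :: real^'n^'k) (e' :: 's \<Rightarrow> real^'k) (f' :: 's \<Rightarrow> 't \<Rightarrow> real^'n).
           e' \<in> borel_measurable MS
         \<and> (\<forall>s t. agent_best Om (ubar s t) (\<lambda>g. E' *v g = e' s) (f' s t))
         \<and> (\<integral>\<^sup>+\<omega>. ennreal (quad_loss Om (wbar (S \<omega>)) (f' (S \<omega>) (Th \<omega>))) \<partial>M)
           < (\<integral>\<^sup>+\<omega>. ennreal (quad_loss Om (wbar (S \<omega>)) (f (S \<omega>) (Th \<omega>))) \<partial>M)"
  proof -
  interpret prob_space M by (rule assms(1))
  define a0 where "a0 = f undefined undefined"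
  have a0: "A *v a0 = a" using assms(12) unfolding agent_best_def a0_def by blast
  obtain E' :: "real^'n^'k" and T where T: "finite T" "T \<noteq> {}" "orthonorm Om T"
    and best: "\<forall>w u. agent_best Om u (\<lambda>g. E' *v g = E' *v w) (w + proj Om T (u - w))"
    and lossf': "\<forall>w u. quad_loss Om w (w + proj Om T (u - w)) = (\<Sum>t\<in>T. (ip Om t (u - w))^2)"
    and lossf: "\<forall>w x. A *v x = a \<longrightarrow> quad_loss Om w x \<ge> (\<Sum>t\<in>T. (ip Om t (a0 - w))^2)"
    using LA_main[OF assms(8) assms(11) a0 assms(10)] by blast
  define W where "W = (\<lambda>\<omega>. wbar (S \<omega>))"
  define U where "U = (\<lambda>\<omega>. ubar (S \<omega>) (Th \<omega>))"
  have mW: "W \<in> borel_measurable M" unfolding W_def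
    using measurable_compose[OF assms(2) assms(4)] by (simp add: o_def)
  have mU: "U \<in> borel_measurable M" unfolding U_def using assms(5) .
  have sW: "integrable M (\<lambda>\<omega>. (W \<omega> $ i)^2)" for i using assms(6) by (simp add: W_def)
  have sU: "integrable M (\<lambda>\<omega>. (U \<omega> $ i)^2)" for i using assms(7) by (simp add: U_def)
  have lo: "loewner_gt (var_matrix M W) (second_moment M (\<lambda>\<omega>. U \<omega> - W \<omega>))"
    using assms(9) by (simp add: W_def U_def)
  have v0: "Om *v t \<noteq> 0" if "t \<in> T" for t
  proof
    assume "Om *v t = 0"
    then have "ip Om t t = 0" by (simp add: ip_def)
    then show False using T(3) that unfolding orthonorm_def by auto
  qed
  note K = key_ineq[OF assms(1) mW mU sW sU lo v0]
  define f' where "f' = (\<lambda>s t. wbar s + proj Om T (ubar s t - wbar s))"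
  have e'm: "(\<lambda>s. E' *v wbar s) \<in> borel_measurable MS"
    using measurable_compose[OF assms(4) borel_measurable_continuous_onI[OF matrix_vector_mult_linear_continuous_on[of UNIV E']]]
    by (simp add: o_def)
  have bestf': "\<forall>s t. agent_best Om (ubar s t) (\<lambda>g. E' *v g = E' *v wbar s) (f' s t)"
    using best by (simp add: f'_def)
  have l1: "quad_loss Om (wbar (S \<omega>)) (f' (S \<omega>) (Th \<omega>)) = (\<Sum>t\<in>T. ((Om *v t) \<bullet> (U \<omega> - W \<omega>))^2)" for \<omega>
    using lossf' by (simp add: f'_def U_def W_def ip_alt[OF assms(8)])
  have l2: "quad_loss Om (wbar (S \<omega>)) (f (S \<omega>) (Th \<omega>)) \<ge> (\<Sum>t\<in>T. ((Om *v t) \<bullet> (a0 - W \<omega>))^2)" for \<omega>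
  proof -
    have "A *v f (S \<omega>) (Th \<omega>) = a" using assms(12) unfolding agent_best_def by blast
    then show ?thesis using lossf by (simp add: W_def ip_alt[OF assms(8)])
  qed
  have i1: "integrable M (\<lambda>\<omega>. \<Sum>t\<in>T. ((Om *v t) \<bullet> (U \<omega> - W \<omega>))^2)"
    using K(1) by simp
  have i2: "integrable M (\<lambda>\<omega>. \<Sum>t\<in>T. ((Om *v t) \<bullet> (a0 - W \<omega>))^2)"
    using K(2) by simp
  have "(\<integral>\<^sup>+\<omega>. ennreal (quad_loss Om (wbar (S \<omega>)) (f' (S \<omega>) (Th \<omega>))) \<partial>M)
      = (\<integral>\<^sup>+\<omega>. ennreal (\<Sum>t\<in>T. ((Om *v t) \<bullet> (U \<omega> - W \<omega>))^2) \<partial>M)"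
    unfolding l1 ..
  also have "\<dots> = ennreal (\<integral>\<omega>. (\<Sum>t\<in>T. ((Om *v t) \<bullet> (U \<omega> - W \<omega>))^2) \<partial>M)"
    by (rule nn_integral_eq_integral[OF i1]) (simp add: sum_nonneg)
  also have "\<dots> = ennreal (\<Sum>t\<in>T. \<integral>\<omega>. ((Om *v t) \<bullet> (U \<omega> - W \<omega>))^2 \<partial>M)"
    using K(1) by (simp add: integral_sum)
  also have "\<dots> < ennreal (\<Sum>t\<in>T. \<integral>\<omega>. ((Om *v t) \<bullet> (a0 - W \<omega>))^2 \<partial>M)"
  proof (subst ennreal_less_iff)
    show "0 \<le> (\<Sum>t\<in>T. \<integral>\<omega>. ((Om *v t) \<bullet> (U \<omega> - W \<omega>))^2 \<partial>M)"
      by (intro sum_nonneg integral_nonneg_AE) simp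
    show "(\<Sum>t\<in>T. \<integral>\<omega>. ((Om *v t) \<bullet> (U \<omega> - W \<omega>))^2 \<partial>M) < (\<Sum>t\<in>T. \<integral>\<omega>. ((Om *v t) \<bullet> (a0 - W \<omega>))^2 \<partial>M)"
      using K(3) T(1,2) by (intro sum_strict_mono) auto
  qed
  also have "\<dots> = ennreal (\<integral>\<omega>. (\<Sum>t\<in>T. ((Om *v t) \<bullet> (a0 - W \<omega>))^2) \<partial>M)"
    using K(2) by (simp add: integral_sum)
  also have "\<dots> = (\<integral>\<^sup>+\<omega>. ennreal (\<Sum>t\<in>T. ((Om *v t) \<bullet> (a0 - W \<omega>))^2) \<partial>M)"
    by (rule nn_integral_eq_integral[OF i2, symmetric]) (simp add: sum_nonneg)
  also have "\<dots> \<le> (\<integral>\<^sup>+\<omega>. ennreal (quad_loss Om (wbar (S \<omega>)) (f (S \<omega>) (Th \<omega>))) \<partial>M)"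
    by (intro nn_integral_mono ennreal_leI l2)
  finally show ?thesis using e'm bestf' by blast
qed

end
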